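(* If $\Gamma$ is a flat Type $\mathcal A$ connection, then $\Gamma$ is linearly equivalent to $\Gamma_i^0$ for some $0\le i\le5$, where $\Gamma_0^0=\Gamma(0,0,0,0,0,0)$, $\Gamma_1^0=\Gamma(1,0,0,1,0,0)$, $\Gamma_2^0=\Gamma(-1,0,0,0,0,1)$, $\Gamma_3^0=\Gamma(0,0,0,0,0,1)$, $\Gamma_4^0=\Gamma(0,0,0,0,1,0)$, $\Gamma_5^0=\Gamma(1,0,0,1,-1,0)$. Furthermore, $\Gamma_i^0$ is not linearly equivalent to $\Gamma_j^0$ for $i\ne j$.
   Context: A torsion-free connection on $\mathbb R^2$ has Christoffel symbols $\nabla_{\partial_{x^i}}\partial_{x^j}=\Gamma_{ij}^k\partial_{x^k}$. For real constants, $\Gamma(a,b,c,d,e,f)$ denotes the connection on $\mathbb R^2$ whose Christoffel symbols in the standard coordinates $(x^1,x^2)$ are the constants $\Gamma_{11}^1=a$, $\Gamma_{11}^2=b$, $\Gamma_{12}^1=\Gamma_{21}^1=c$, $\Gamma_{12}^2=\Gamma_{21}^2=d$, $\Gamma_{22}^1=e$, $\Gamma_{22}^2=f$; a Type $\mathcal A$ connection is one of this form. Flat means the curvature tensor vanishes. Two Type $\mathcal A$ connections are linearly equivalent if there is $T\in GL(2,\mathbb R)$ with $T^*\nabla_2=\nabla_1$ (they differ by a linear change of coordinates). *)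

theory Defs
  imports "HOL-Analysis.Analysis"
begin

text \<open>Affine connections on R^2 with constant Christoffel symbols (Type A).
  Coordinates are indexed by the two-element type 2, with index 1 standing for x^1
  and index 2 (= 0 in type 2) for x^2.  A connection is given by its Christoffel
  symbols: G i j k = Gamma_{ij}^k, i.e. nabla_{d_i} d_j = sum_k G i j k d_k.\<close>

type_synonym conn = "2 \<Rightarrow> 2 \<Rightarrow> 2 \<Rightarrow> real"

definition Gam :: "real \<Rightarrow> real \<Rightarrow> real \<Rightarrow> real \<Rightarrow> real \<Rightarrow> real \<Rightarrow> conn" where
  "Gam a b c d e f = (\<lambda>i j k.
     if i = 1 \<and> j = 1 then (if k = 1 then a else b)
     else if i = 2 \<and> j = 2 then (if k = 1 then e else f)
     else (if k = 1 then c else d))"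

text \<open>Curvature of a connection with constant Christoffel symbols:
  R(d_i,d_j)d_k = nabla_i nabla_j d_k - nabla_j nabla_i d_k = sum_l R i j k l d_l
  (derivative terms vanish since the symbols are constant).\<close>

definition curv :: "conn \<Rightarrow> 2 \<Rightarrow> 2 \<Rightarrow> 2 \<Rightarrow> 2 \<Rightarrow> real" where
  "curv G i j k l = (\<Sum>m\<in>UNIV. G j k m * G i m l - G i k m * G j m l)"

definition flat :: "conn \<Rightarrow> bool" where
  "flat G \<longleftrightarrow> (\<forall>i j k l. curv G i j k l = 0)"

text \<open>Pullback of a constant-coefficient connection by the linear map x \<mapsto> T x:
  T_* d_i = sum_a T$a$i d_a, and (T^* nabla)_X Y = T^{-1}_* (nabla_{T_* X} T_* Y).\<close>

definition pullback :: "real^2^2 \<Rightarrow> conn \<Rightarrow> conn" where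
  "pullback T G = (\<lambda>i j k. \<Sum>c\<in>UNIV. matrix_inv T $ k $ c *
       (\<Sum>a\<in>UNIV. \<Sum>b\<in>UNIV. G a b c * T $ a $ i * T $ b $ j))"

definition lin_equiv :: "conn \<Rightarrow> conn \<Rightarrow> bool" where
  "lin_equiv G1 G2 \<longleftrightarrow> (\<exists>T::real^2^2. invertible T \<and> pullback T G2 = G1)"

definition Gamma0 :: "nat \<Rightarrow> conn" where
  "Gamma0 i = (if i = 0 then Gam 0 0 0 0 0 0
     else if i = 1 then Gam 1 0 0 1 0 0
     else if i = 2 then Gam (-1) 0 0 0 0 1
     else if i = 3 then Gam 0 0 0 0 0 1
     else if i = 4 then Gam 0 0 0 0 1 0
     else Gam 1 0 0 1 (-1) 0)"

end

theory Submission
  imports Defs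
begin

definition mat2 :: "real\<Rightarrow>real\<Rightarrow>real\<Rightarrow>real\<Rightarrow>real^2^2" where
  "mat2 p q r s = (\<chi> i j. if i = 1 then (if j = 1 then p else q) else (if j = 1 then r else s))"

lemma mat2_simps[simp]: "mat2 p q r s $1$1 = p" "mat2 p q r s $1$2 = q"
  "mat2 p q r s $2$1 = r" "mat2 p q r s $2$2 = s"
  by (simp_all add: mat2_def)

lemma mat2_eta: "T = mat2 (T$1$1) (T$1$2) (T$2$1) (T$2$2)"
  by (simp add: vec_eq_iff forall_2)

lemma sq_aux: "(p::real) * s \<noteq> q * r \<Longrightarrow> p*(p*(s * s)) + q*(q*(r*r)) = p*(q*(r*(s*2))) \<Longrightarrow> False"
proof -
  assume a: "p * s \<noteq> q * r" and b: "p*(p*(s * s)) + q*(q*(r*r)) = p*(q*(r*(s*2)))"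
  have "(p * s - q*r)^2 = 0" using b by (simp add: power2_eq_square algebra_simps)
  then show False using a by simp
qed

lemma mat2_invs:
  fixes D :: real
  assumes "D \<noteq> 0" "D = p * s - q * r"
  shows "mat2 p q r s ** mat2 (s/D) (-q/D) (-r/D) (p/D) = mat 1"
    "mat2 (s/D) (-q/D) (-r/D) (p/D) ** mat2 p q r s = mat 1"
  using assms(1)
  by (auto simp: vec_eq_iff forall_2 matrix_matrix_mult_def sum_2 mat_def field_simps assms(2) dest: sq_aux)

lemma mat2_inv:
  fixes D :: real
  assumes "D \<noteq> 0" "D = p * s - q * r"
  shows "matrix_inv (mat2 p q r s) = mat2 (s/D) (-q/D) (-r/D) (p/D)"
proof -
  let ?T = "mat2 p q r s" and ?M = "mat2 (s/D) (-q/D) (-r/D) (p/D)"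
  have h: "?T ** ?M = mat 1" "?M ** ?T = mat 1" using mat2_invs[OF assms] by auto
  have "\<exists>A'. ?T ** A' = mat 1 \<and> A' ** ?T = mat 1" using h by blast
  then have i: "?T ** matrix_inv ?T = mat 1 \<and> matrix_inv ?T ** ?T = mat 1"
    unfolding matrix_inv_def by (rule someI_ex)
  have "?M = ?M ** (?T ** matrix_inv ?T)" using i by simp
  also have "\<dots> = (?M ** ?T) ** matrix_inv ?T" by (simp add: matrix_mul_assoc)
  also have "\<dots> = matrix_inv ?T" using h by simp
  finally show ?thesis by simp
qed

lemma invertible_mat2: "invertible (mat2 p q r s) \<longleftrightarrow> p * s - q * r \<noteq> 0"
  by (simp add: invertible_det_nz det_2)

lemma lin2:
  fixes D :: real
  assumes "D \<noteq> 0" "D = p * s - q * r"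
  shows "(x = s/D*u - q/D*w \<and> y = p/D*w - r/D*u) \<longleftrightarrow> (p*x + q*y = u \<and> r * x + s * y = w)"
proof -
  have "(x = s/D*u - q/D*w \<and> y = p/D*w - r/D*u) \<longleftrightarrow> (D*x = s*u - q*w \<and> D*y = p*w - r*u)"
    using assms(1) by (auto simp: field_simps)
  also have "\<dots> \<longleftrightarrow> (p*x + q*y = u \<and> r * x + s * y = w)"
  proof
    assume h: "D*x = s*u - q*w \<and> D*y = p*w - r*u"
    have h1: "D*x = s*u - q*w" and h2: "D*y = p*w - r*u" using h by auto
    have "D * (p*x + q*y) = D * u" using h1 h2 assms(2) by algebra
    moreover have "D * (r * x + s * y) = D * w"
      using h1 h2 assms(2) by algebra
    ultimately show "p*x + q*y = u \<and> r * x + s * y = w" using assms(1) by simp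
  next
    assume h: "p*x + q*y = u \<and> r * x + s * y = w"
    then show "D*x = s*u - q*w \<and> D*y = p*w - r*u"
      by (auto simp: assms(2) algebra_simps)
  qed
  finally show ?thesis .
qed

definition mm :: "real\<Rightarrow>real\<Rightarrow>real\<Rightarrow>real\<Rightarrow>real\<Rightarrow>real\<Rightarrow>real\<Rightarrow>real" where
  "mm a c e x1 x2 y1 y2 = x1*y1*a + (x1*y2+x2*y1)*c + x2*y2*e"

definition iso where
  "iso a' b' c' d' e' f' a b c d e f p q r s \<longleftrightarrow>
     mm a c e p r p r = a'*p + b'*q \<and> mm b d f p r p r = a'*r + b' * s \<and>
     mm a c e p r q s = c'*p + d'*q \<and> mm b d f p r q s = c'*r + d' * s \<and>
     mm a c e q s q s = e'*p + f'*q \<and> mm b d f q s q s = e'*r + f' * s"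

lemma pb_iff:
  fixes D :: real
  assumes "D \<noteq> 0" "D = p * s - q * r"
  shows "pullback (mat2 p q r s) (Gam a b c d e f) = Gam a' b' c' d' e' f' \<longleftrightarrow>
     iso a' b' c' d' e' f' a b c d e f p q r s"
proof -
  have k: "\<And>U W x y. (s*U/D - q*W/D = x \<and> p*W/D - r*U/D = y) \<longleftrightarrow> (p*x+q*y = U \<and> r*x+s*y=W)"
  proof -
    fix U W x y
    have e1: "s*U/D - q*W/D = s/D*U - q/D*W" "p*W/D - r*U/D = p/D*W - r/D*U" by simp_all
    show "(s*U/D - q*W/D = x \<and> p*W/D - r*U/D = y) \<longleftrightarrow> (p*x+q*y = U \<and> r*x+s*y=W)"
      unfolding e1 using lin2[OF assms, where x=x and u=U and w=W and y=y] by auto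
  qed
  have k2: "\<And>U W x y R. (s*U/D - q*W/D = x \<and> p*W/D - r*U/D = y \<and> R) \<longleftrightarrow> (p*x+q*y = U \<and> r*x+s*y=W \<and> R)"
    using k by blast
  show ?thesis
    apply (simp add: pullback_def mat2_inv[OF assms] fun_eq_iff forall_2 sum_2 Gam_def)
    apply (simp only: k2 k)
    apply (simp add: iso_def mm_def algebra_simps)
    apply (intro iffI conjI; (elim conjE)?; simp)
    done
qed

lemma lin_equiv_Gam:
  "lin_equiv (Gam a' b' c' d' e' f') (Gam a b c d e f) \<longleftrightarrow>
   (\<exists>p q r s. p * s - q * r \<noteq> 0 \<and> iso a' b' c' d' e' f' a b c d e f p q r s)"
proof
  assume "lin_equiv (Gam a' b' c' d' e' f') (Gam a b c d e f)"
  then obtain T where T: "invertible T" "pullback T (Gam a b c d e f) = Gam a' b' c' d' e' f'"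
    unfolding lin_equiv_def by auto
  define p q r s where "p = T$1$1" "q = T$1$2" "r = T$2$1" "s = T$2$2"
  have TT: "T = mat2 p q r s" unfolding p_q_r_s_def by (rule mat2_eta)
  have D: "p * s - q * r \<noteq> 0" using T(1) unfolding TT invertible_mat2 .
  have "iso a' b' c' d' e' f' a b c d e f p q r s"
    using T(2) unfolding TT pb_iff[OF D refl] .
  then show "\<exists>p q r s. p * s - q * r \<noteq> 0 \<and> iso a' b' c' d' e' f' a b c d e f p q r s"
    using D by blast
next
  assume "\<exists>p q r s. p * s - q * r \<noteq> 0 \<and> iso a' b' c' d' e' f' a b c d e f p q r s"
  then obtain p q r s where D: "p * s - q * r \<noteq> 0" and I: "iso a' b' c' d' e' f' a b c d e f p q r s"
    by blast
  show "lin_equiv (Gam a' b' c' d' e' f') (Gam a b c d e f)"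
    unfolding lin_equiv_def
    by (rule exI[of _ "mat2 p q r s"]) (use D I in \<open>auto simp: invertible_mat2 pb_iff[OF D refl]\<close>)
qed

lemma mm_bil: "mm a c e (p*x1+q*x2) (r*x1+s*x2) (p*y1+q*y2) (r*y1+s*y2) =
   x1*y1*mm a c e p r p r + (x1*y2+x2*y1)*mm a c e p r q s + x2*y2*mm a c e q s q s"
  by (simp add: mm_def algebra_simps)

lemma iso_bil:
  assumes "iso a' b' c' d' e' f' a b c d e f p q r s"
  shows "mm a c e (p*x1+q*x2) (r*x1+s*x2) (p*y1+q*y2) (r*y1+s*y2) =
           p * mm a' c' e' x1 x2 y1 y2 + q * mm b' d' f' x1 x2 y1 y2"
    "mm b d f (p*x1+q*x2) (r*x1+s*x2) (p*y1+q*y2) (r*y1+s*y2) =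
           r * mm a' c' e' x1 x2 y1 y2 + s * mm b' d' f' x1 x2 y1 y2"
proof -
  have h: "mm a c e p r p r = a'*p + b'*q" "mm b d f p r p r = a'*r + b' * s"
     "mm a c e p r q s = c'*p + d'*q" "mm b d f p r q s = c'*r + d' * s"
     "mm a c e q s q s = e'*p + f'*q" "mm b d f q s q s = e'*r + f' * s"
    using assms unfolding iso_def by auto
  show "mm a c e (p*x1+q*x2) (r*x1+s*x2) (p*y1+q*y2) (r*y1+s*y2) =
           p * mm a' c' e' x1 x2 y1 y2 + q * mm b' d' f' x1 x2 y1 y2"
    "mm b d f (p*x1+q*x2) (r*x1+s*x2) (p*y1+q*y2) (r*y1+s*y2) =
           r * mm a' c' e' x1 x2 y1 y2 + s * mm b' d' f' x1 x2 y1 y2"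
    by (simp_all only: mm_bil h) (simp_all add: mm_def algebra_simps)
qed

lemma iso_trans:
  assumes "iso a'' b'' c'' d'' e'' f'' a' b' c' d' e' f' p2 q2 r2 s2"
    "iso a' b' c' d' e' f' a b c d e f p q r s"
  shows "iso a'' b'' c'' d'' e'' f'' a b c d e f (p*p2+q*r2) (p*q2+q * s2) (r*p2+s*r2) (r*q2+s * s2)"
proof -
  have h: "mm a' c' e' p2 r2 p2 r2 = a''*p2 + b''*q2" "mm b' d' f' p2 r2 p2 r2 = a''*r2 + b'' * s2"
     "mm a' c' e' p2 r2 q2 s2 = c''*p2 + d''*q2" "mm b' d' f' p2 r2 q2 s2 = c''*r2 + d'' * s2"
     "mm a' c' e' q2 s2 q2 s2 = e''*p2 + f''*q2" "mm b' d' f' q2 s2 q2 s2 = e''*r2 + f'' * s2"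
    using assms(1) unfolding iso_def by auto
  show ?thesis unfolding iso_def iso_bil[OF assms(2)] h
    by (simp add: algebra_simps)
qed

lemma iso_trans_det: "((p::real)*p2+q*r2) * (r*q2+s * s2) - (p*q2+q * s2) * (r*p2+s*r2) = (p * s - q * r) * (p2 * s2 - q2 * r2)"
  by algebra

lemma lin_equiv_trans:
  "lin_equiv (Gam a'' b'' c'' d'' e'' f'') (Gam a' b' c' d' e' f') \<Longrightarrow>
   lin_equiv (Gam a' b' c' d' e' f') (Gam a b c d e f) \<Longrightarrow>
   lin_equiv (Gam a'' b'' c'' d'' e'' f'') (Gam a b c d e f)"
  unfolding lin_equiv_Gam
proof (elim exE conjE)
  fix p q r s p2 q2 r2 s2
  assume "p2 * s2 - q2 * r2 \<noteq> 0" "iso a'' b'' c'' d'' e'' f'' a' b' c' d' e' f' p2 q2 r2 s2"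
    "p * s - q * r \<noteq> 0" "iso a' b' c' d' e' f' a b c d e f p q r s"
  then show "\<exists>p q r s. p * s - q * r \<noteq> 0 \<and> iso a'' b'' c'' d'' e'' f'' a b c d e f p q r s"
    using iso_trans[of a'' b'' c'' d'' e'' f'' a' b' c' d' e' f' p2 q2 r2 s2 a b c d e f p q r s]
      iso_trans_det[of p p2 q r2 r q2 s s2]
    by (intro exI[of _ "p*p2+q*r2"] exI[of _ "p*q2+q * s2"] exI[of _ "r*p2+s*r2"] exI[of _ "r*q2+s * s2"]) simp
qed


lemma iso_inv_pt:
  fixes D :: real
  assumes I: "iso a' b' c' d' e' f' a b c d e f p q r s" and D: "D \<noteq> 0" "D = p * s - q * r"
    and x: "x1 = s/D*X1 - q/D*X2" "x2 = p/D*X2 - r/D*X1"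
    and y: "y1 = s/D*Y1 - q/D*Y2" "y2 = p/D*Y2 - r/D*Y1"
  shows "mm a' c' e' x1 x2 y1 y2 = s/D*mm a c e X1 X2 Y1 Y2 - q/D*mm b d f X1 X2 Y1 Y2 \<and>
         mm b' d' f' x1 x2 y1 y2 = p/D*mm b d f X1 X2 Y1 Y2 - r/D*mm a c e X1 X2 Y1 Y2"
proof -
  have hx: "p*x1+q*x2 = X1 \<and> r * x1 + s * x2 = X2"
    using lin2[OF D, where x=x1 and y=x2 and u=X1 and w=X2] x by simp
  have hy: "p*y1+q*y2 = Y1 \<and> r * y1 + s * y2 = Y2"
    using lin2[OF D, where x=y1 and y=y2 and u=Y1 and w=Y2] y by simp
  have "mm a c e X1 X2 Y1 Y2 = p * mm a' c' e' x1 x2 y1 y2 + q * mm b' d' f' x1 x2 y1 y2"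
    "mm b d f X1 X2 Y1 Y2 = r * mm a' c' e' x1 x2 y1 y2 + s * mm b' d' f' x1 x2 y1 y2"
    using iso_bil[OF I, of x1 x2 y1 y2] hx hy by auto
  then show ?thesis
    using lin2[OF D, where x="mm a' c' e' x1 x2 y1 y2" and y="mm b' d' f' x1 x2 y1 y2"
       and u="mm a c e X1 X2 Y1 Y2" and w="mm b d f X1 X2 Y1 Y2"] by simp
qed

lemma iso_sym:
  fixes D :: real
  assumes I: "iso a' b' c' d' e' f' a b c d e f p q r s" and D: "D \<noteq> 0" "D = p * s - q * r"
  shows "iso a b c d e f a' b' c' d' e' f' (s/D) (-q/D) (-r/D) (p/D)"
proof -
  have m: "mm a c e 1 0 1 0 = a" "mm a c e 1 0 0 1 = c" "mm a c e 0 1 0 1 = e" for a c e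
    by (simp_all add: mm_def)
  have 1: "mm a' c' e' (s/D) (-r/D) (s/D) (-r/D) = s/D*a - q/D*b \<and>
        mm b' d' f' (s/D) (-r/D) (s/D) (-r/D) = p/D*b - r/D*a"
    using iso_inv_pt[OF I D, of "s/D" 1 0 "-r/D" "s/D" 1 0 "-r/D"] by (simp add: m)
  have 2: "mm a' c' e' (s/D) (-r/D) (-q/D) (p/D) = s/D*c - q/D*d \<and>
        mm b' d' f' (s/D) (-r/D) (-q/D) (p/D) = p/D*d - r/D*c"
    using iso_inv_pt[OF I D, of "s/D" 1 0 "-r/D" "-q/D" 0 1 "p/D"] by (simp add: m)
  have 3: "mm a' c' e' (-q/D) (p/D) (-q/D) (p/D) = s/D*e - q/D*f \<and>
        mm b' d' f' (-q/D) (p/D) (-q/D) (p/D) = p/D*f - r/D*e"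
    using iso_inv_pt[OF I D, of "-q/D" 0 1 "p/D" "-q/D" 0 1 "p/D"] by (simp add: m)
  show ?thesis unfolding iso_def using 1 2 3 by (simp add: algebra_simps)
qed

lemma lin_equiv_sym:
  "lin_equiv (Gam a' b' c' d' e' f') (Gam a b c d e f) \<Longrightarrow>
   lin_equiv (Gam a b c d e f) (Gam a' b' c' d' e' f')"
  unfolding lin_equiv_Gam
proof (elim exE conjE)
  fix p q r s
  assume D: "p * s - q * r \<noteq> 0" and I: "iso a' b' c' d' e' f' a b c d e f p q r s"
  define D' where "D' = p * s - q * r"
  have D': "D' \<noteq> 0" using D D'_def by simp
  have "s/D' * (p/D') - (-q/D') * (-r/D') = (p * s - q * r)/(D' * D')"
    by (simp add: diff_divide_distrib mult.commute)
  also have "\<dots> = 1/D'" using D' by (simp add: D'_def[symmetric])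
  finally have "s/D' * (p/D') - (-q/D') * (-r/D') = 1/D'" .
  then have "s/D' * (p/D') - (-q/D') * (-r/D') \<noteq> 0" using D' by simp
  then show "\<exists>p q r s. p * s - q * r \<noteq> 0 \<and> iso a b c d e f a' b' c' d' e' f' p q r s"
    using iso_sym[OF I D' D'_def] by blast
qed

lemma flat_Gam: "flat (Gam a b c d e f) \<longleftrightarrow>
   (b * e = c * d \<and> b * c + d * d = a * d + b * f \<and> a * e + c * f = c * c + d * e)"
  apply (simp add: flat_def curv_def forall_2 sum_2 Gam_def)
  apply (auto simp: algebra_simps)
  done

lemma flat_id:
  assumes F: "b * e = c * d" "b * c + d * d = a * d + b * f" "a * e + c * f = c * c + d * e"
  shows "mm a c e x1 x2 (mm a c e y1 y2 z1 z2) (mm b d f y1 y2 z1 z2) =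
         mm a c e y1 y2 (mm a c e x1 x2 z1 z2) (mm b d f x1 x2 z1 z2)"
    "mm b d f x1 x2 (mm a c e y1 y2 z1 z2) (mm b d f y1 y2 z1 z2) =
         mm b d f y1 y2 (mm a c e x1 x2 z1 z2) (mm b d f x1 x2 z1 z2)"
proof -
  have "mm a c e x1 x2 (mm a c e y1 y2 z1 z2) (mm b d f y1 y2 z1 z2) -
         mm a c e y1 y2 (mm a c e x1 x2 z1 z2) (mm b d f x1 x2 z1 z2) =
        (x1 * y2 - x2 * y1) * (z1 * (c * d - b * e) + z2 * (a * e+c * f-c * c-d * e))"
    by (simp add: mm_def algebra_simps)
  moreover have "mm b d f x1 x2 (mm a c e y1 y2 z1 z2) (mm b d f y1 y2 z1 z2) -
         mm b d f y1 y2 (mm a c e x1 x2 z1 z2) (mm b d f x1 x2 z1 z2) =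
        (x1 * y2 - x2 * y1) * (z1 * (b * c + d * d - a * d - b * f) + z2 * (b * e - c * d))"
    by (simp add: mm_def algebra_simps)
  ultimately show "mm a c e x1 x2 (mm a c e y1 y2 z1 z2) (mm b d f y1 y2 z1 z2) =
         mm a c e y1 y2 (mm a c e x1 x2 z1 z2) (mm b d f x1 x2 z1 z2)"
    "mm b d f x1 x2 (mm a c e y1 y2 z1 z2) (mm b d f y1 y2 z1 z2) =
         mm b d f y1 y2 (mm a c e x1 x2 z1 z2) (mm b d f x1 x2 z1 z2)"
    using F by auto
qed

lemma mm_comm: "mm a c e x1 x2 y1 y2 = mm a c e y1 y2 x1 x2"
  by (simp add: mm_def algebra_simps)

lemma mm_lin: "mm a c e x1 x2 (u * y1 + v * z1) (u * y2 + v * z2) = u * mm a c e x1 x2 y1 y2 + v * mm a c e x1 x2 z1 z2"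
  by (simp add: mm_def algebra_simps)

lemma N_gen:
  fixes al be :: real
  assumes F: "b * e = c * d" "b * c + d * d = a * d + b * f" "a * e + c * f = c * c + d * e"
  assumes qd: "q = mm a c e al be al be" and sd: "s = mm b d f al be al be"
  assumes sgd: "sg = al * a + be * c + al * d + be * f"
  assumes tgd: "tg = (al * a + be * c) * (al * d + be * f) - (al * c + be * e) * (al * b + be * d)"
  shows "iso 0 1 (-tg) sg (-sg * tg) (sg * sg - tg) a b c d e f al q be s"
proof -
  have h3: "mm a c e al be q s = - tg * al + sg * q" unfolding qd sd sgd tgd mm_def by algebra
  have h4: "mm b d f al be q s = - tg * be + sg * s" unfolding qd sd sgd tgd mm_def by algebra
  have c3: "mm a c e q s al be = - tg * al + sg * q" using h3 mm_comm by metis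
  have c4: "mm b d f q s al be = - tg * be + sg * s" using h4 mm_comm by metis
  have h5: "mm a c e q s q s = - sg * tg * al + (sg * sg - tg) * q"
  proof -
    have "mm a c e q s q s = mm a c e al be (mm a c e q s al be) (mm b d f q s al be)"
      using flat_id(1)[OF F, of q s al be al be] unfolding qd[symmetric] sd[symmetric] .
    also have "\<dots> = mm a c e al be (- tg * al + sg * q) (- tg * be + sg * s)" unfolding c3 c4 ..
    also have "\<dots> = - tg * q + sg * (- tg * al + sg * q)" unfolding mm_lin h3 qd[symmetric] ..
    finally show ?thesis by (simp add: algebra_simps)
  qed
  have h6: "mm b d f q s q s = - sg * tg * be + (sg * sg - tg) * s"
  proof -
    have "mm b d f q s q s = mm b d f al be (mm a c e q s al be) (mm b d f q s al be)"
      using flat_id(2)[OF F, of q s al be al be] unfolding qd[symmetric] sd[symmetric] .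
    also have "\<dots> = mm b d f al be (- tg * al + sg * q) (- tg * be + sg * s)" unfolding c3 c4 ..
    also have "\<dots> = - tg * s + sg * (- tg * be + sg * s)" unfolding mm_lin h4 sd[symmetric] ..
    finally show ?thesis by (simp add: algebra_simps)
  qed
  show ?thesis unfolding iso_def using h3 h4 h5 h6 qd sd by simp
qed



lemma caseA:
  fixes sg tg :: real
  assumes t: "tg \<noteq> 0" and h: "sg * sg = 4 * tg"
  shows "iso 1 0 0 1 0 0 0 1 (-tg) sg (-sg * tg) (sg * sg - tg)
     (sg/tg) (1 - sg * sg/(2 * tg)) (-1/tg) (sg/(2 * tg))"
    "(sg/tg) * (sg/(2 * tg)) - (1 - sg * sg/(2 * tg)) * (-1/tg) \<noteq> 0"
proof -
  show "(sg/tg) * (sg/(2 * tg)) - (1 - sg * sg/(2 * tg)) * (-1/tg) \<noteq> 0"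
    using t by (simp add: field_simps)
  show "iso 1 0 0 1 0 0 0 1 (-tg) sg (-sg * tg) (sg * sg - tg)
     (sg/tg) (1 - sg * sg/(2 * tg)) (-1/tg) (sg/(2 * tg))"
    unfolding iso_def mm_def using t
    apply (simp add: field_simps)
    apply (intro conjI)
    using h by algebra+
qed


lemma caseB:
  fixes sg tg k :: real
  assumes t: "tg \<noteq> 0" and k: "k \<noteq> 0" and h: "4 * k * k = sg * sg - 4 * tg"
  defines "u1 \<equiv> sg/tg" and "u2 \<equiv> -1/tg" and "n1 \<equiv> 1 - sg * sg/(2 * tg)" and "n2 \<equiv> sg/(2 * tg)"
  shows "iso (-1) 0 0 0 0 1 0 1 (-tg) sg (-sg * tg) (sg * sg - tg)
     ((n1/k - u1)/2) ((u1 + n1/k)/2) ((n2/k - u2)/2) ((u2 + n2/k)/2)"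
    "((n1/k - u1)/2) * ((u2 + n2/k)/2) - ((u1 + n1/k)/2) * ((n2/k - u2)/2) \<noteq> 0"
proof -
  show "((n1/k - u1)/2) * ((u2 + n2/k)/2) - ((u1 + n1/k)/2) * ((n2/k - u2)/2) \<noteq> 0"
    using t k unfolding u1_def u2_def n1_def n2_def by (simp add: field_simps)
  show "iso (-1) 0 0 0 0 1 0 1 (-tg) sg (-sg * tg) (sg * sg - tg)
     ((n1/k - u1)/2) ((u1 + n1/k)/2) ((n2/k - u2)/2) ((u2 + n2/k)/2)"
    unfolding iso_def mm_def u1_def u2_def n1_def n2_def using t k
    apply (simp add: field_simps)
    apply (intro conjI)
    using h by algebra+
qed

lemma caseC:
  fixes sg tg k :: real
  assumes t: "tg \<noteq> 0" and k: "k \<noteq> 0" and h: "4 * k * k = 4 * tg - sg * sg"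
  defines "u1 \<equiv> sg/tg" and "u2 \<equiv> -1/tg" and "n1 \<equiv> 1 - sg * sg/(2 * tg)" and "n2 \<equiv> sg/(2 * tg)"
  shows "iso 1 0 0 1 (-1) 0 0 1 (-tg) sg (-sg * tg) (sg * sg - tg) u1 (n1/k) u2 (n2/k)"
    "u1 * (n2/k) - (n1/k) * u2 \<noteq> 0"
proof -
  show "u1 * (n2/k) - (n1/k) * u2 \<noteq> 0"
    using t k unfolding u1_def u2_def n1_def n2_def by (simp add: field_simps)
  show "iso 1 0 0 1 (-1) 0 0 1 (-tg) sg (-sg * tg) (sg * sg - tg) u1 (n1/k) u2 (n2/k)"
    unfolding iso_def mm_def u1_def u2_def n1_def n2_def using t k
    apply (simp add: field_simps)
    apply (intro conjI)
    using h by algebra+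
qed

lemma caseD:
  fixes sg tg :: real
  assumes t: "tg = 0" and s: "sg \<noteq> 0"
  shows "iso 0 0 0 0 0 1 0 1 (-tg) sg (-sg * tg) (sg * sg - tg) 1 0 (-1/sg) (1/(sg * sg))"
    "1 * (1/(sg * sg)) - 0 * (-1/sg) \<noteq> 0"
  using s unfolding iso_def mm_def t by (simp_all add: field_simps)

lemma caseE:
  fixes sg tg :: real
  assumes t: "tg = 0" and s: "sg = 0"
  shows "iso 0 0 0 0 1 0 0 1 (-tg) sg (-sg * tg) (sg * sg - tg) 0 1 1 0"
    "0 * 0 - 1 * 1 \<noteq> (0::real)"
  unfolding iso_def mm_def t s by simp_all



lemma G0: "Gamma0 0 = Gam 0 0 0 0 0 0" "Gamma0 1 = Gam 1 0 0 1 0 0" "Gamma0 2 = Gam (-1) 0 0 0 0 1"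
  "Gamma0 3 = Gam 0 0 0 0 0 1" "Gamma0 4 = Gam 0 0 0 0 1 0" "Gamma0 5 = Gam 1 0 0 1 (-1) 0"
  by (simp_all add: Gamma0_def)

lemma equiv_from_iso:
  assumes "iso a' b' c' d' e' f' a b c d e f p q r s" "p * s - q * r \<noteq> 0"
  shows "lin_equiv (Gam a b c d e f) (Gam a' b' c' d' e' f')"
  by (rule lin_equiv_sym) (use assms in \<open>auto simp: lin_equiv_Gam\<close>)

lemma N_class:
  fixes sg tg :: real
  shows "\<exists>i\<le>5. lin_equiv (Gam 0 1 (-tg) sg (-sg * tg) (sg * sg - tg)) (Gamma0 i)"
proof (cases "tg = 0")
  case True
  show ?thesis
  proof (cases "sg = 0")
    case True
    have "lin_equiv (Gam 0 1 (-tg) sg (-sg * tg) (sg * sg - tg)) (Gamma0 4)"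
      unfolding G0 using caseE[OF \<open>tg = 0\<close> True] by (rule equiv_from_iso)
    then show ?thesis by (intro exI[of _ 4]) simp
  next
    case False
    have "lin_equiv (Gam 0 1 (-tg) sg (-sg * tg) (sg * sg - tg)) (Gamma0 3)"
      unfolding G0 using caseD[OF \<open>tg = 0\<close> False] by (rule equiv_from_iso)
    then show ?thesis by (intro exI[of _ 3]) simp
  qed
next
  case False
  consider "sg * sg - 4 * tg = 0" | "sg * sg - 4 * tg > 0" | "sg * sg - 4 * tg < 0" by linarith
  then show ?thesis
  proof cases
    case 1
    have "lin_equiv (Gam 0 1 (-tg) sg (-sg * tg) (sg * sg - tg)) (Gamma0 1)"
      unfolding G0 using caseA[OF False] 1 by (intro equiv_from_iso) auto
    then show ?thesis by (intro exI[of _ 1]) simp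
  next
    case 2
    define k where "k = sqrt (sg * sg - 4 * tg) / 2"
    have k0: "k \<noteq> 0" using 2 unfolding k_def by simp
    have "4 * k * k = sqrt (sg * sg - 4 * tg) * sqrt (sg * sg - 4 * tg)" unfolding k_def by simp
    also have "\<dots> = sg * sg - 4 * tg" using 2 by simp
    finally have kk: "4 * k * k = sg * sg - 4 * tg" .
    have "lin_equiv (Gam 0 1 (-tg) sg (-sg * tg) (sg * sg - tg)) (Gamma0 2)"
      unfolding G0 using caseB[OF False k0 kk] by (rule equiv_from_iso)
    then show ?thesis by (intro exI[of _ 2]) simp
  next
    case 3
    define k where "k = sqrt (4 * tg - sg * sg) / 2"
    have k0: "k \<noteq> 0" using 3 unfolding k_def by simp
    have "4 * k * k = sqrt (4 * tg - sg * sg) * sqrt (4 * tg - sg * sg)" unfolding k_def by simp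
    also have "\<dots> = 4 * tg - sg * sg" using 3 by simp
    finally have kk: "4 * k * k = 4 * tg - sg * sg" .
    have "lin_equiv (Gam 0 1 (-tg) sg (-sg * tg) (sg * sg - tg)) (Gamma0 5)"
      unfolding G0 using caseC[OF False k0 kk] by (rule equiv_from_iso)
    then show ?thesis by (intro exI[of _ 5]) simp
  qed
qed


lemma Gamma0_Gam: "\<exists>a b c d e f. Gamma0 i = Gam a b c d e f"
  unfolding Gamma0_def by (auto; blast)

lemma lin_equiv_refl: "lin_equiv (Gam a b c d e f) (Gam a b c d e f)"
  unfolding lin_equiv_Gam
  by (rule exI[of _ 1], rule exI[of _ 0], rule exI[of _ 0], rule exI[of _ 1]) (simp add: iso_def mm_def)

lemma gen_case:
  fixes al be :: real
  assumes F: "b * e = c * d" "b * c + d * d = a * d + b * f" "a * e + c * f = c * c + d * e"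
    and Dx: "al * mm b d f al be al be - mm a c e al be al be * be \<noteq> 0"
  shows "\<exists>i\<le>5. lin_equiv (Gam a b c d e f) (Gamma0 i)"
proof -
  define q where "q = mm a c e al be al be"
  define s where "s = mm b d f al be al be"
  define sg where "sg = al * a + be * c + al * d + be * f"
  define tg where "tg = (al * a + be * c) * (al * d + be * f) - (al * c + be * e) * (al * b + be * d)"
  have I: "iso 0 1 (-tg) sg (-sg * tg) (sg * sg - tg) a b c d e f al q be s"
    by (rule N_gen[OF F q_def s_def sg_def tg_def])
  have "al * s - q * be \<noteq> 0" using Dx unfolding q_def s_def .
  then have e1: "lin_equiv (Gam a b c d e f) (Gam 0 1 (-tg) sg (-sg * tg) (sg * sg - tg))"
    using I by (rule equiv_from_iso[rotated])
  obtain i where i: "i \<le> 5" "lin_equiv (Gam 0 1 (-tg) sg (-sg * tg) (sg * sg - tg)) (Gamma0 i)"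
    using N_class by blast
  obtain a' b' c' d' e' f' where g: "Gamma0 i = Gam a' b' c' d' e' f'" using Gamma0_Gam by blast
  have "lin_equiv (Gam a b c d e f) (Gamma0 i)"
    using lin_equiv_trans[OF e1 i(2)[unfolded g]] g by simp
  then show ?thesis using i(1) by blast
qed

lemma existence:
  assumes "flat (Gam a b c d e f)"
  shows "\<exists>i\<le>5. lin_equiv (Gam a b c d e f) (Gamma0 i)"
proof -
  have F: "b * e = c * d" "b * c + d * d = a * d + b * f" "a * e + c * f = c * c + d * e"
    using assms unfolding flat_Gam by auto
  show ?thesis
  proof (cases "\<exists>al be. al * mm b d f al be al be - mm a c e al be al be * be \<noteq> 0")
    case True
    then obtain al be where "al * mm b d f al be al be - mm a c e al be al be * be \<noteq> 0" by blast
    then show ?thesis by (rule gen_case[OF F])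
  next
    case False
    then have z: "\<And>al be. al * mm b d f al be al be - mm a c e al be al be * be = 0" by blast
    have b0: "b = 0" using z[of 1 0] by (simp add: mm_def)
    have e0: "e = 0" using z[of 0 1] by (simp add: mm_def)
    have h1: "b + 2 * d + f - a - 2 * c - e = 0" using z[of 1 1] by (simp add: mm_def algebra_simps)
    have h2: "b - 2 * d + f + a - 2 * c + e = 0" using z[of 1 "-1"] by (simp add: mm_def algebra_simps)
    have f2: "f = 2 * c" and a2: "a = 2 * d" using h1 h2 b0 e0 by linarith+
    have "d * d = 0" using F(2) b0 a2 by (simp add: algebra_simps)
    then have d0: "d = 0" by simp
    have "c * c = 0" using F(3) e0 f2 by (simp add: algebra_simps)
    then have c0: "c = 0" by simp
    have "Gam a b c d e f = Gamma0 0" using b0 e0 d0 c0 a2 f2 by (simp add: G0)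
    then show ?thesis using lin_equiv_refl[of a b c d e f] by (intro exI[of _ 0]) simp
  qed
qed



lemma ne_0_1: "iso 0 0 0 0 0 0 1 0 0 1 0 0 p q r s \<Longrightarrow> p * s - q * r \<noteq> 0 \<Longrightarrow> False"
  unfolding iso_def mm_def by algebra

lemma ne_0_2: "iso 0 0 0 0 0 0 (-1) 0 0 0 0 1 p q r s \<Longrightarrow> p * s - q * r \<noteq> 0 \<Longrightarrow> False"
  unfolding iso_def mm_def by algebra

lemma ne_0_3: "iso 0 0 0 0 0 0 0 0 0 0 0 1 p q r s \<Longrightarrow> p * s - q * r \<noteq> 0 \<Longrightarrow> False"
  unfolding iso_def mm_def by algebra

lemma ne_0_4: "iso 0 0 0 0 0 0 0 0 0 0 1 0 p q r s \<Longrightarrow> p * s - q * r \<noteq> 0 \<Longrightarrow> False"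
  unfolding iso_def mm_def by algebra

lemma ne_0_5: "iso 0 0 0 0 0 0 1 0 0 1 (-1) 0 p q r s \<Longrightarrow> p * s - q * r \<noteq> 0 \<Longrightarrow> False"
  unfolding iso_def mm_def by algebra

lemma ne_1_2: "iso 1 0 0 1 0 0 (-1) 0 0 0 0 1 p q r s \<Longrightarrow> p * s - q * r \<noteq> 0 \<Longrightarrow> False"
  unfolding iso_def mm_def by algebra

lemma ne_1_3: "iso 1 0 0 1 0 0 0 0 0 0 0 1 p q r s \<Longrightarrow> p * s - q * r \<noteq> 0 \<Longrightarrow> False"
  unfolding iso_def mm_def by algebra

lemma ne_1_4: "iso 1 0 0 1 0 0 0 0 0 0 1 0 p q r s \<Longrightarrow> p * s - q * r \<noteq> 0 \<Longrightarrow> False"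
  unfolding iso_def mm_def by algebra

lemma ne_1_5: "iso 1 0 0 1 0 0 1 0 0 1 (-1) 0 p q r s \<Longrightarrow> p * s - q * r \<noteq> 0 \<Longrightarrow> False"
  unfolding iso_def mm_def by algebra

lemma ne_2_3: "iso (-1) 0 0 0 0 1 0 0 0 0 0 1 p q r s \<Longrightarrow> p * s - q * r \<noteq> 0 \<Longrightarrow> False"
  unfolding iso_def mm_def by algebra

lemma ne_2_4: "iso (-1) 0 0 0 0 1 0 0 0 0 1 0 p q r s \<Longrightarrow> p * s - q * r \<noteq> 0 \<Longrightarrow> False"
  unfolding iso_def mm_def by algebra

lemma ne_2_5: "iso (-1) 0 0 0 0 1 1 0 0 1 (-1) 0 p q r s \<Longrightarrow> p * s - q * r \<noteq> 0 \<Longrightarrow> False"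
proof -
  assume I: "iso (-1) 0 0 0 0 1 1 0 0 1 (-1) 0 p q r s" and D: "p * s - q * r \<noteq> 0"
  have h1: "p * q - r * s = 0" and h2: "p * s + r * q = 0" using I unfolding iso_def mm_def by (auto simp: algebra_simps)
  have "(p * p + r * r) * (q * q + s * s) = (p * q - r * s) * (p * q - r * s) + (p * s + r * q) * (p * s + r * q)"
    by (simp add: algebra_simps)
  also have "\<dots> = 0" using h1 h2 by simp
  finally have "p * p + r * r = 0 \<or> q * q + s * s = 0" by simp
  then have "(p = 0 \<and> r = 0) \<or> (q = 0 \<and> s = 0)"
    by (metis sum_squares_eq_zero_iff)
  then show False using D by auto
qed

lemma ne_3_4: "iso 0 0 0 0 0 1 0 0 0 0 1 0 p q r s \<Longrightarrow> p * s - q * r \<noteq> 0 \<Longrightarrow> False"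
  unfolding iso_def mm_def by algebra

lemma ne_3_5: "iso 0 0 0 0 0 1 1 0 0 1 (-1) 0 p q r s \<Longrightarrow> p * s - q * r \<noteq> 0 \<Longrightarrow> False"
  unfolding iso_def mm_def by algebra

lemma ne_4_5: "iso 0 0 0 0 1 0 1 0 0 1 (-1) 0 p q r s \<Longrightarrow> p * s - q * r \<noteq> 0 \<Longrightarrow> False"
  unfolding iso_def mm_def by algebra

lemma nl_0_1: "\<not> lin_equiv (Gam 0 0 0 0 0 0) (Gam 1 0 0 1 0 0)"
  unfolding lin_equiv_Gam using ne_0_1 by blast
lemma nl_1_0: "\<not> lin_equiv (Gam 1 0 0 1 0 0) (Gam 0 0 0 0 0 0)"
  using nl_0_1 lin_equiv_sym by blast

lemma nl_0_2: "\<not> lin_equiv (Gam 0 0 0 0 0 0) (Gam (-1) 0 0 0 0 1)"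
  unfolding lin_equiv_Gam using ne_0_2 by blast
lemma nl_2_0: "\<not> lin_equiv (Gam (-1) 0 0 0 0 1) (Gam 0 0 0 0 0 0)"
  using nl_0_2 lin_equiv_sym by blast

lemma nl_0_3: "\<not> lin_equiv (Gam 0 0 0 0 0 0) (Gam 0 0 0 0 0 1)"
  unfolding lin_equiv_Gam using ne_0_3 by blast
lemma nl_3_0: "\<not> lin_equiv (Gam 0 0 0 0 0 1) (Gam 0 0 0 0 0 0)"
  using nl_0_3 lin_equiv_sym by blast

lemma nl_0_4: "\<not> lin_equiv (Gam 0 0 0 0 0 0) (Gam 0 0 0 0 1 0)"
  unfolding lin_equiv_Gam using ne_0_4 by blast
lemma nl_4_0: "\<not> lin_equiv (Gam 0 0 0 0 1 0) (Gam 0 0 0 0 0 0)"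
  using nl_0_4 lin_equiv_sym by blast

lemma nl_0_5: "\<not> lin_equiv (Gam 0 0 0 0 0 0) (Gam 1 0 0 1 (-1) 0)"
  unfolding lin_equiv_Gam using ne_0_5 by blast
lemma nl_5_0: "\<not> lin_equiv (Gam 1 0 0 1 (-1) 0) (Gam 0 0 0 0 0 0)"
  using nl_0_5 lin_equiv_sym by blast

lemma nl_1_2: "\<not> lin_equiv (Gam 1 0 0 1 0 0) (Gam (-1) 0 0 0 0 1)"
  unfolding lin_equiv_Gam using ne_1_2 by blast
lemma nl_2_1: "\<not> lin_equiv (Gam (-1) 0 0 0 0 1) (Gam 1 0 0 1 0 0)"
  using nl_1_2 lin_equiv_sym by blast

lemma nl_1_3: "\<not> lin_equiv (Gam 1 0 0 1 0 0) (Gam 0 0 0 0 0 1)"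
  unfolding lin_equiv_Gam using ne_1_3 by blast
lemma nl_3_1: "\<not> lin_equiv (Gam 0 0 0 0 0 1) (Gam 1 0 0 1 0 0)"
  using nl_1_3 lin_equiv_sym by blast

lemma nl_1_4: "\<not> lin_equiv (Gam 1 0 0 1 0 0) (Gam 0 0 0 0 1 0)"
  unfolding lin_equiv_Gam using ne_1_4 by blast
lemma nl_4_1: "\<not> lin_equiv (Gam 0 0 0 0 1 0) (Gam 1 0 0 1 0 0)"
  using nl_1_4 lin_equiv_sym by blast

lemma nl_1_5: "\<not> lin_equiv (Gam 1 0 0 1 0 0) (Gam 1 0 0 1 (-1) 0)"
  unfolding lin_equiv_Gam using ne_1_5 by blast
lemma nl_5_1: "\<not> lin_equiv (Gam 1 0 0 1 (-1) 0) (Gam 1 0 0 1 0 0)"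
  using nl_1_5 lin_equiv_sym by blast

lemma nl_2_3: "\<not> lin_equiv (Gam (-1) 0 0 0 0 1) (Gam 0 0 0 0 0 1)"
  unfolding lin_equiv_Gam using ne_2_3 by blast
lemma nl_3_2: "\<not> lin_equiv (Gam 0 0 0 0 0 1) (Gam (-1) 0 0 0 0 1)"
  using nl_2_3 lin_equiv_sym by blast

lemma nl_2_4: "\<not> lin_equiv (Gam (-1) 0 0 0 0 1) (Gam 0 0 0 0 1 0)"
  unfolding lin_equiv_Gam using ne_2_4 by blast
lemma nl_4_2: "\<not> lin_equiv (Gam 0 0 0 0 1 0) (Gam (-1) 0 0 0 0 1)"
  using nl_2_4 lin_equiv_sym by blast

lemma nl_2_5: "\<not> lin_equiv (Gam (-1) 0 0 0 0 1) (Gam 1 0 0 1 (-1) 0)"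
  unfolding lin_equiv_Gam using ne_2_5 by blast
lemma nl_5_2: "\<not> lin_equiv (Gam 1 0 0 1 (-1) 0) (Gam (-1) 0 0 0 0 1)"
  using nl_2_5 lin_equiv_sym by blast

lemma nl_3_4: "\<not> lin_equiv (Gam 0 0 0 0 0 1) (Gam 0 0 0 0 1 0)"
  unfolding lin_equiv_Gam using ne_3_4 by blast
lemma nl_4_3: "\<not> lin_equiv (Gam 0 0 0 0 1 0) (Gam 0 0 0 0 0 1)"
  using nl_3_4 lin_equiv_sym by blast

lemma nl_3_5: "\<not> lin_equiv (Gam 0 0 0 0 0 1) (Gam 1 0 0 1 (-1) 0)"
  unfolding lin_equiv_Gam using ne_3_5 by blast
lemma nl_5_3: "\<not> lin_equiv (Gam 1 0 0 1 (-1) 0) (Gam 0 0 0 0 0 1)"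
  using nl_3_5 lin_equiv_sym by blast

lemma nl_4_5: "\<not> lin_equiv (Gam 0 0 0 0 1 0) (Gam 1 0 0 1 (-1) 0)"
  unfolding lin_equiv_Gam using ne_4_5 by blast
lemma nl_5_4: "\<not> lin_equiv (Gam 1 0 0 1 (-1) 0) (Gam 0 0 0 0 1 0)"
  using nl_4_5 lin_equiv_sym by blast

lemmas nl_all = nl_0_1 nl_1_0 nl_0_2 nl_2_0 nl_0_3 nl_3_0 nl_0_4 nl_4_0 nl_0_5 nl_5_0 nl_1_2 nl_2_1 nl_1_3 nl_3_1 nl_1_4 nl_4_1 nl_1_5 nl_5_1 nl_2_3 nl_3_2 nl_2_4 nl_4_2 nl_2_5 nl_5_2 nl_3_4 nl_4_3 nl_3_5 nl_5_3 nl_4_5 nl_5_4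

lemma nonequiv: "\<forall>i\<le>5. \<forall>j\<le>5. i \<noteq> j \<longrightarrow> \<not> lin_equiv (Gamma0 i) (Gamma0 j)"
  unfolding Gamma0_def by (auto simp: nl_all)



theorem theorem3p2:
  fixes a b c d e f :: real
  assumes "flat (Gam a b c d e f)"
  shows "(\<exists>i\<le>5. lin_equiv (Gam a b c d e f) (Gamma0 i))
     \<and> (\<forall>i\<le>5. \<forall>j\<le>5. i \<noteq> j \<longrightarrow> \<not> lin_equiv (Gamma0 i) (Gamma0 j))"
  using existence[OF assms] nonequiv by blast

end
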